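(* Consider the allocation problem with $m$ divisible goods and $n$ agents as described in the context, and let $\pi=(\pi_1,\ldots,\pi_n)$ be the agents' true preference lists. Let $a^\pi$ be the allocation produced by the Synchronized Greedy (SG) mechanism when every agent $i$ bids $\pi_i$. Then for every allocation $a\neq a^\pi$ there exists an agent $i$ such that $a^\pi_{i*} >_i a_{i*}$.
   Context: There are $m$ distinct divisible goods; good $j$ ($1\le j\le m$) is available in amount $q_j>0$. There are $n$ agents; agent $i$ ($1\le i\le n$) is to receive a total of $r_i>0$. Assume $\sum_j q_j=\sum_i r_i$. An allocation is a family of numbers $a_{ij}\ge 0$ with $\sum_j a_{ij}=r_i$ for all $i$ and $\sum_i a_{ij}=q_j$ for all $j$; $a_{i*}=(a_{i1},\ldots,a_{im})$ is agent $i$'s share. Each agent $i$ has a true preference list $\pi_i$, a permutation of the goods ($\pi_i(1)$ is the most preferred good). Agent $i$ (lexicographically) prefers share $a_{i*}$ to $b_{i*}$, written $a_{i*}>_i b_{i*}$, if the leftmost nonzero coordinate of $(a_{i\pi_i(1)}-b_{i\pi_i(1)},\ldots,a_{i\pi_i(m)}-b_{i\pi_i(m)})$ is positive. The SG mechanism: each agent $i$ submits a bid $\sigma_i$, a permutation of the goods. The mechanism runs a continuous process over time $t\in[0,1]$: at each time, each agent $i$ receives, at rate $r_i$ per unit time, the good that is highest in $\sigma_i$ among the goods not yet exhausted (a good is exhausted once the total amount handed out equals its quantity $q_j$; several agents may receive the same good simultaneously, and whenever a good is exhausted all agents receiving it switch instantly to their next non-exhausted good in their bid). At time $1$ all goods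 are exhausted and all agents have their totals $r_i$; $a^\sigma_{ij}$ denotes the total amount of good $j$ received by agent $i$. *)

theory Defs
  imports Main "HOL.Real"
begin

text \<open>Goods are indexed by 0..<m, agents by 0..<n. A bid / preference list is a
list of goods (index 0 = most preferred) that is a permutation of 0..<m.\<close>

definition is_pref_list :: "nat \<Rightarrow> nat list \<Rightarrow> bool" where
  "is_pref_list m p \<longleftrightarrow> distinct p \<and> set p = {..<m}"

definition is_allocation ::
  "nat \<Rightarrow> nat \<Rightarrow> (nat \<Rightarrow> real) \<Rightarrow> (nat \<Rightarrow> real) \<Rightarrow> (nat \<Rightarrow> nat \<Rightarrow> real) \<Rightarrow> bool" where
  "is_allocation n m q r a \<longleftrightarrow>
     (\<forall>i<n. \<forall>j<m. a i j \<ge> 0) \<and>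
     (\<forall>i<n. (\<Sum>j<m. a i j) = r i) \<and>
     (\<forall>j<m. (\<Sum>i<n. a i j) = q j)"

definition lex_prefers :: "nat \<Rightarrow> nat list \<Rightarrow> (nat \<Rightarrow> real) \<Rightarrow> (nat \<Rightarrow> real) \<Rightarrow> bool" where
  "lex_prefers m p s t \<longleftrightarrow>
     (\<exists>k<m. (\<forall>l<k. s (p ! l) = t (p ! l)) \<and> s (p ! k) > t (p ! k))"

text \<open>One phase of the SG eating process, between two consecutive exhaustion events.
x i j is the amount of good j handed to agent i so far. Each agent eats, at rate r i,
the first non-exhausted good of its bid; the phase lasts until the first good
(among those being eaten) is exhausted.\<close>
definition sg_step ::
  "nat \<Rightarrow> nat \<Rightarrow> (nat \<Rightarrow> real) \<Rightarrow> (nat \<Rightarrow> real) \<Rightarrow> (nat \<Rightarrow> nat list)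
    \<Rightarrow> (nat \<Rightarrow> nat \<Rightarrow> real) \<Rightarrow> (nat \<Rightarrow> nat \<Rightarrow> real)" where
  "sg_step n m q r \<sigma> x =
    (let rem = (\<lambda>j. q j - (\<Sum>i<n. x i j));
         active = (\<lambda>i. \<exists>j\<in>set (\<sigma> i). rem j > 0);
         cur = (\<lambda>i. hd (filter (\<lambda>j. rem j > 0) (\<sigma> i)));
         rate = (\<lambda>j. \<Sum>i\<in>{i. i < n \<and> active i \<and> cur i = j}. r i);
         D = {rem j / rate j | j. j < m \<and> rate j > 0}
     in if D = {} then x
        else (\<lambda>i j. if i < n \<and> j < m
                    then x i j + (if active i \<and> cur i = j then r i * Min D else 0)
                    else 0))"

text \<open>The SG allocation a^sigma: every phase exhausts at least one good, so m phases
starting from the empty allocation run the process to completion (time 1).\<close>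
definition SG ::
  "nat \<Rightarrow> nat \<Rightarrow> (nat \<Rightarrow> real) \<Rightarrow> (nat \<Rightarrow> real) \<Rightarrow> (nat \<Rightarrow> nat list) \<Rightarrow> (nat \<Rightarrow> nat \<Rightarrow> real)" where
  "SG n m q r \<sigma> = (sg_step n m q r \<sigma> ^^ m) (\<lambda>i j. 0)"

end

theory Submission
  imports Defs
begin

lemma hd_filter_nth:
  "distinct xs \<Longrightarrow> filter P xs \<noteq> [] \<Longrightarrow> hd (filter P xs) = xs ! k \<Longrightarrow> k < length xs
   \<Longrightarrow> l < k \<Longrightarrow> \<not> P (xs ! l)"
proof (induction xs arbitrary: k l)
  case Nil then show ?case by simp
next
  case (Cons a xs)
  show ?case
  proof (cases "P a")
    case True
    then have "hd (filter P (a#xs)) = a" by simp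
    with Cons.prems have "(a#xs)!k = (a#xs)!0" by simp
    moreover have "0 < length (a#xs)" by simp
    ultimately have "k = 0" using nth_eq_iff_index_eq[OF Cons.prems(1) Cons.prems(4)] by blast
    with Cons.prems(5) show ?thesis by simp
  next
    case False
    then have h: "hd (filter P (a#xs)) = hd (filter P xs)" and ne: "filter P xs \<noteq> []"
      using Cons.prems(2) by auto
    have Ph: "P (hd (filter P xs))" using ne hd_in_set[OF ne] by simp
    show ?thesis
    proof (cases k)
      case 0 then show ?thesis using Cons.prems(3) h Ph False by simp
    next
      case (Suc k')
      have a: "hd (filter P xs) = xs ! k'" using Cons.prems(3) h Suc by simp
      have b: "k' < length xs" using Cons.prems(4) Suc by simp
      show ?thesis
      proof (cases l)
        case 0 then show ?thesis using False by simp
      next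
        case (Suc l')
        then have "l' < k'" using Cons.prems(5) \<open>k = Suc k'\<close> by simp
        from Cons.IH[OF _ ne a b this] Cons.prems(1) Suc show ?thesis by simp
      qed
    qed
  qed
qed

lemma exists_increase:
  fixes f :: "nat \<Rightarrow> real"
  shows "f 0 < f k \<Longrightarrow> \<exists>p<k. f p < f (Suc p)"
proof (induction k)
  case 0 then show ?case by simp
next
  case (Suc k)
  show ?case
  proof (cases "f 0 < f k")
    case True then obtain p where "p < k" "f p < f (Suc p)" using Suc.IH by blast
    then show ?thesis by (intro exI[of _ p]) simp
  next
    case False then show ?thesis using Suc.prems by (intro exI[of _ k]) auto
  qed
qed

locale SGL =
  fixes n m :: nat and q r :: "nat \<Rightarrow> real" and \<pi> :: "nat \<Rightarrow> nat list"
  assumes qp: "\<forall>j<m. q j > 0" and rp: "\<forall>i<n. r i > 0"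
    and pr: "\<forall>i<n. is_pref_list m (\<pi> i)" and npos: "0 < n"
begin

definition "remX x j = q j - (\<Sum>i<n. x i j)"
definition "actX x i = (\<exists>j\<in>set (\<pi> i). remX x j > 0)"
definition "curX x i = hd (filter (\<lambda>j. remX x j > 0) (\<pi> i))"
definition "rateX x j = (\<Sum>i\<in>{i. i < n \<and> actX x i \<and> curX x i = j}. r i)"
definition "DX x = {remX x j / rateX x j | j. j < m \<and> rateX x j > 0}"
definition "stp = sg_step n m q r \<pi>"
definition "X p = (stp ^^ p) (\<lambda>i j. 0)"

lemma step_eq: "stp x = (if DX x = {} then x else (\<lambda>i j. if i < n \<and> j < m then x i j +
   (if actX x i \<and> curX x i = j then r i * Min (DX x) else 0) else 0))"
  unfolding stp_def sg_step_def Let_def DX_def rateX_def curX_def actX_def remX_def by simp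

lemma finD: "finite (DX x)"
  by (rule finite_subset[of _ "(\<lambda>j. remX x j / rateX x j) ` {..<m}"]) (auto simp: DX_def)

lemma rate_nonneg: "rateX x j \<ge> 0"
  unfolding rateX_def by (rule sum_nonneg) (use rp in auto)

lemma len: "i < n \<Longrightarrow> length (\<pi> i) = m"
  using pr distinct_card[of "\<pi> i"] by (auto simp: is_pref_list_def)

lemma setpi: "i < n \<Longrightarrow> set (\<pi> i) = {..<m}"
  using pr by (auto simp: is_pref_list_def)

lemma act_cur: "actX x i \<Longrightarrow> remX x (curX x i) > 0 \<and> curX x i \<in> set (\<pi> i)"
proof -
  assume "actX x i"
  then have ne: "filter (\<lambda>j. remX x j > 0) (\<pi> i) \<noteq> []"
    unfolding actX_def by (auto simp: filter_empty_conv)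
  from hd_in_set[OF ne] show ?thesis unfolding curX_def by simp
qed

lemma Dnonneg: "(\<forall>j<m. remX x j \<ge> 0) \<Longrightarrow> d \<in> DX x \<Longrightarrow> d \<ge> 0"
  by (auto simp: DX_def)

lemma MinD_le: "DX x \<noteq> {} \<Longrightarrow> j < m \<Longrightarrow> rateX x j > 0 \<Longrightarrow> Min (DX x) \<le> remX x j / rateX x j"
  by (rule Min_le[OF finD]) (auto simp: DX_def)

lemma sum_step:
  assumes D: "DX x \<noteq> {}" and j: "j < m"
  shows "(\<Sum>i<n. stp x i j) = (\<Sum>i<n. x i j) + rateX x j * Min (DX x)"
proof -
  have "(\<Sum>i<n. stp x i j) = (\<Sum>i<n. x i j + (if actX x i \<and> curX x i = j then r i * Min (DX x) else 0))"
    by (rule sum.cong) (use D j in \<open>auto simp: step_eq\<close>)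
  also have "\<dots> = (\<Sum>i<n. x i j) + (\<Sum>i<n. if actX x i \<and> curX x i = j then r i * Min (DX x) else 0)"
    by (simp add: sum.distrib)
  also have "(\<Sum>i<n. if actX x i \<and> curX x i = j then r i * Min (DX x) else 0)
       = (\<Sum>i\<in>{i\<in>{..<n}. actX x i \<and> curX x i = j}. r i * Min (DX x))"
    by (rule sum.inter_filter[symmetric]) simp
  also have "{i\<in>{..<n}. actX x i \<and> curX x i = j} = {i. i < n \<and> actX x i \<and> curX x i = j}" by auto
  finally show ?thesis unfolding rateX_def by (simp add: sum_distrib_right)
qed

lemma step_mono:
  assumes inv: "\<forall>j<m. remX x j \<ge> 0" and i: "i < n" and j: "j < m"
  shows "x i j \<le> stp x i j"
proof (cases "DX x = {}")
  case True then show ?thesis by (simp add: step_eq)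
next
  case False
  have "Min (DX x) \<ge> 0" using Dnonneg[OF inv Min_in[OF finD False]] .
  moreover have "r i > 0" using rp i by auto
  ultimately show ?thesis using False i j by (simp add: step_eq)
qed

lemma step_inv:
  assumes inv: "\<forall>j<m. remX x j \<ge> 0"
  shows "\<forall>j<m. remX (stp x) j \<ge> 0"
proof (intro allI impI)
  fix j assume j: "j < m"
  show "remX (stp x) j \<ge> 0"
  proof (cases "DX x = {}")
    case True then show ?thesis using inv j by (simp add: step_eq)
  next
    case False
    have M: "Min (DX x) \<ge> 0" using Dnonneg[OF inv Min_in[OF finD False]] .
    have "rateX x j * Min (DX x) \<le> remX x j"
    proof (cases "rateX x j > 0")
      case True
      have "Min (DX x) \<le> remX x j / rateX x j" using MinD_le[OF False j True] .
      then show ?thesis using True by (simp add: field_simps)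
    next
      case False
      then have "rateX x j = 0" using rate_nonneg[of x j] by simp
      then show ?thesis using inv j by simp
    qed
    then show ?thesis using sum_step[OF False j] by (simp add: remX_def)
  qed
qed

lemma step_rem_mono:
  assumes inv: "\<forall>j<m. remX x j \<ge> 0" and j: "j < m"
  shows "remX (stp x) j \<le> remX x j"
proof -
  have "(\<Sum>i<n. x i j) \<le> (\<Sum>i<n. stp x i j)"
    by (rule sum_mono) (use step_mono[OF inv _ j] in auto)
  then show ?thesis by (simp add: remX_def)
qed

lemma exhaust:
  assumes D: "DX x \<noteq> {}"
  shows "\<exists>j0<m. remX x j0 > 0 \<and> remX (stp x) j0 = 0"
proof -
  from Min_in[OF finD D] obtain j0 where j0: "j0 < m" "rateX x j0 > 0"
    and M: "Min (DX x) = remX x j0 / rateX x j0" by (auto simp: DX_def)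
  have "remX (stp x) j0 = remX x j0 - rateX x j0 * (remX x j0 / rateX x j0)"
    using sum_step[OF D j0(1)] M by (simp add: remX_def)
  then have z: "remX (stp x) j0 = 0" using j0(2) by simp
  have "{i. i < n \<and> actX x i \<and> curX x i = j0} \<noteq> {}"
  proof
    assume "{i. i < n \<and> actX x i \<and> curX x i = j0} = {}"
    then have "rateX x j0 = 0" unfolding rateX_def by (simp only: sum.empty)
    with j0(2) show False by simp
  qed
  then obtain i where "actX x i" "curX x i = j0" by auto
  then have "remX x j0 > 0" using act_cur by blast
  with z j0 show ?thesis by blast
qed

lemma empty_D:
  assumes D: "DX x = {}" and j: "j < m"
  shows "remX x j \<le> 0"
proof (rule ccontr)
  assume "\<not> remX x j \<le> 0"
  then have pos: "remX x j > 0" by simp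
  have "j \<in> set (\<pi> 0)" using setpi[OF npos] j by auto
  then have a: "actX x 0" using pos unfolding actX_def by blast
  define c where "c = curX x 0"
  have "c \<in> set (\<pi> 0)" using act_cur[OF a] c_def by simp
  then have c: "c < m" using setpi[OF npos] by auto
  have "r 0 \<le> rateX x c" unfolding rateX_def
    by (rule member_le_sum) (use a c_def npos rp in auto)
  then have "rateX x c > 0" using rp npos by force
  then have "remX x c / rateX x c \<in> DX x" using c unfolding DX_def by blast
  with D show False by simp
qed

lemma X0: "X 0 = (\<lambda>i j. 0)" by (simp add: X_def)
lemma XSuc: "X (Suc p) = stp (X p)" by (simp add: X_def)

lemma invX: "\<forall>j<m. remX (X p) j \<ge> 0"
proof (induction p)
  case 0 then show ?case using qp by (simp add: X0 remX_def less_imp_le)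
next
  case (Suc p) then show ?case using step_inv by (simp add: XSuc)
qed

lemma monoX: "p \<le> p' \<Longrightarrow> i < n \<Longrightarrow> j < m \<Longrightarrow> X p i j \<le> X p' i j"
proof (induction p' rule: dec_induct)
  case base then show ?case by simp
next
  case (step k)
  have "X k i j \<le> stp (X k) i j" by (rule step_mono[OF invX]) (use step in auto)
  then show ?case using step by (simp add: XSuc)
qed

lemma remX_anti: "p \<le> p' \<Longrightarrow> j < m \<Longrightarrow> remX (X p') j \<le> remX (X p) j"
proof -
  assume a: "p \<le> p'" "j < m"
  have "(\<Sum>i<n. X p i j) \<le> (\<Sum>i<n. X p' i j)"
    by (rule sum_mono) (use monoX[OF a(1) _ a(2)] in auto)
  then show ?thesis by (simp add: remX_def)
qed

definition "Z p = {j. j < m \<and> remX (X p) j = 0}"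

lemma Z_card: "Z p = {..<m} \<or> p \<le> card (Z p)"
proof (induction p)
  case 0 then show ?case by simp
next
  case (Suc p)
  show ?case
  proof (cases "DX (X p) = {}")
    case True
    then have "X (Suc p) = X p" by (simp add: XSuc step_eq)
    moreover have "Z p = {..<m}" using empty_D[OF True] invX[of p]
      unfolding Z_def by (auto intro: order.antisym)
    ultimately show ?thesis unfolding Z_def by simp
  next
    case False
    from exhaust[OF False] obtain j0 where j0: "j0 < m" "remX (X p) j0 > 0" "remX (X (Suc p)) j0 = 0"
      by (auto simp: XSuc)
    have sub: "Z p \<subseteq> Z (Suc p)" unfolding Z_def
      using remX_anti[of p "Suc p"] invX[of "Suc p"] by (force intro: order.antisym)
    have "j0 \<in> Z (Suc p)" "j0 \<notin> Z p" using j0 unfolding Z_def by auto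
    then have ps: "Z p \<subset> Z (Suc p)" using sub by blast
    have fin: "finite (Z (Suc p))" unfolding Z_def by simp
    have "card (Z p) < card (Z (Suc p))" by (rule psubset_card_mono[OF fin ps])
    moreover have "Z p \<noteq> {..<m}" using \<open>j0 \<notin> Z p\<close> j0 by auto
    ultimately show ?thesis using Suc.IH by simp
  qed
qed

lemma final_exh: "j < m \<Longrightarrow> remX (X m) j = 0"
proof -
  assume j: "j < m"
  have sub: "Z m \<subseteq> {..<m}" unfolding Z_def by auto
  have "Z m = {..<m}"
    using Z_card[of m] card_seteq[OF _ sub] by auto
  with j show ?thesis unfolding Z_def by auto
qed

lemma eat:
  assumes i: "i < n" and j: "j < m" and pos: "X m i j > 0"
  shows "\<exists>p<m. actX (X p) i \<and> curX (X p) i = j \<and> remX (X p) j > 0"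
proof -
  have "(\<lambda>p. X p i j) 0 < (\<lambda>p. X p i j) m" using pos by (simp add: X0)
  from exists_increase[OF this] obtain p where p: "p < m" "X p i j < X (Suc p) i j" by auto
  then have D: "DX (X p) \<noteq> {}" by (auto simp: XSuc step_eq)
  with p i j have "actX (X p) i \<and> curX (X p) i = j"
    by (auto simp: XSuc step_eq split: if_splits)
  with p act_cur show ?thesis by blast
qed

lemma nth_lt: "i < n \<Longrightarrow> k < m \<Longrightarrow> \<pi> i ! k < m"
proof -
  assume i: "i < n" and k: "k < m"
  have "k < length (\<pi> i)" using len[OF i] k by simp
  then have "\<pi> i ! k \<in> set (\<pi> i)" by (rule nth_mem)
  then show ?thesis using setpi[OF i] by auto
qed

lemma pos_of: "i < n \<Longrightarrow> j < m \<Longrightarrow> \<exists>k<m. \<pi> i ! k = j"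
proof -
  assume i: "i < n" and j: "j < m"
  have "j \<in> set (\<pi> i)" using setpi[OF i] j by auto
  then obtain k where "k < length (\<pi> i)" "\<pi> i ! k = j" by (auto simp: in_set_conv_nth)
  then show ?thesis using len[OF i] by auto
qed

lemma firstdiff:
  fixes a F :: "nat \<Rightarrow> nat \<Rightarrow> real"
  assumes i: "i < n" and k0: "k0 < m" and d: "a i (\<pi> i ! k0) \<noteq> F i (\<pi> i ! k0)"
  shows "lex_prefers m (\<pi> i) (F i) (a i) \<or>
    (\<exists>k\<le>k0. (\<forall>l<k. a i (\<pi> i ! l) = F i (\<pi> i ! l)) \<and> F i (\<pi> i ! k) < a i (\<pi> i ! k))"
proof -
  define k where "k = (LEAST k. a i (\<pi> i ! k) \<noteq> F i (\<pi> i ! k))"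
  have kk0: "k \<le> k0" unfolding k_def by (rule Least_le) (rule d)
  have eq: "\<forall>l<k. a i (\<pi> i ! l) = F i (\<pi> i ! l)"
    unfolding k_def using not_less_Least by blast
  have dk: "a i (\<pi> i ! k) \<noteq> F i (\<pi> i ! k)" unfolding k_def by (rule LeastI) (rule d)
  show ?thesis
  proof (cases "F i (\<pi> i ! k) > a i (\<pi> i ! k)")
    case True
    then have "lex_prefers m (\<pi> i) (F i) (a i)"
      unfolding lex_prefers_def using kk0 k0 eq by (intro exI[of _ k]) auto
    then show ?thesis by blast
  next
    case False
    then show ?thesis using dk eq kk0 by (intro disjI2 exI[of _ k]) auto
  qed
qed

definition "E g = (LEAST p. remX (X p) g \<le> 0)"

lemma descent:
  fixes a :: "nat \<Rightarrow> nat \<Rightarrow> real"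
  assumes alloc: "is_allocation n m q r a"
  shows "\<forall>i k. i < n \<and> k < m \<and> (\<forall>l<k. a i (\<pi> i ! l) = X m i (\<pi> i ! l))
      \<and> X m i (\<pi> i ! k) < a i (\<pi> i ! k) \<and> E (\<pi> i ! k) = e
      \<longrightarrow> (\<exists>i'<n. lex_prefers m (\<pi> i') (X m i') (a i'))"
proof (induction e rule: less_induct)
  case (less e)
  show ?case
  proof (intro allI impI)
    fix i k
    assume H: "i < n \<and> k < m \<and> (\<forall>l<k. a i (\<pi> i ! l) = X m i (\<pi> i ! l))
      \<and> X m i (\<pi> i ! k) < a i (\<pi> i ! k) \<and> E (\<pi> i ! k) = e"
    define g where "g = \<pi> i ! k"
    have g: "g < m" using H nth_lt g_def by auto
    have col: "(\<Sum>i<n. a i g) = (\<Sum>i<n. X m i g)"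
      using alloc g final_exh[OF g] unfolding is_allocation_def remX_def by auto
    have "\<exists>i'<n. a i' g < X m i' g"
    proof (rule ccontr)
      assume "\<not> ?thesis"
      then have "\<forall>i'\<in>{..<n}. X m i' g \<le> a i' g" by auto
      moreover have "\<exists>i'\<in>{..<n}. X m i' g < a i' g" using H g_def by auto
      ultimately have "(\<Sum>i<n. X m i g) < (\<Sum>i<n. a i g)"
        by (intro sum_strict_mono_ex1) auto
      with col show False by simp
    qed
    then obtain i' where i': "i' < n" "a i' g < X m i' g" by auto
    have "a i' g \<ge> 0" using alloc i' g unfolding is_allocation_def by auto
    then have "X m i' g > 0" using i' by simp
    from eat[OF i'(1) g this] obtain p where p: "p < m" "actX (X p) i'"
      "curX (X p) i' = g" "remX (X p) g > 0" by auto
    have Eg: "p < E g"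
    proof (rule ccontr)
      assume "\<not> p < E g"
      then have "remX (X p) g \<le> remX (X (E g)) g" using remX_anti g by simp
      also have "remX (X (E g)) g \<le> 0" unfolding E_def
        by (rule LeastI[of _ m]) (simp add: final_exh[OF g])
      finally show False using p(4) by simp
    qed
    from pos_of[OF i'(1) g] obtain k0 where k0: "k0 < m" "\<pi> i' ! k0 = g" by auto
    show "\<exists>i'<n. lex_prefers m (\<pi> i') (X m i') (a i')"
    proof -
      have "a i' (\<pi> i' ! k0) \<noteq> X m i' (\<pi> i' ! k0)" using k0 i' by simp
      from firstdiff[where a=a and F="X m", OF i'(1) k0(1) this]
      consider "lex_prefers m (\<pi> i') (X m i') (a i')"
        | k' where "k' \<le> k0" "\<forall>l<k'. a i' (\<pi> i' ! l) = X m i' (\<pi> i' ! l)"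
          "X m i' (\<pi> i' ! k') < a i' (\<pi> i' ! k')" by blast
      then show ?thesis
      proof cases
        case 1 then show ?thesis using i' by blast
      next
        case 2
        have "k' \<noteq> k0" using 2 k0 i' by auto
        then have kk: "k' < k0" using 2 by simp
        have dist: "distinct (\<pi> i')" using pr i' by (simp add: is_pref_list_def)
        have ne: "filter (\<lambda>j. remX (X p) j > 0) (\<pi> i') \<noteq> []"
          using p(2) unfolding actX_def by (auto simp: filter_empty_conv)
        have "hd (filter (\<lambda>j. remX (X p) j > 0) (\<pi> i')) = \<pi> i' ! k0"
          using p(3) k0 unfolding curX_def by simp
        from hd_filter_nth[OF dist ne this _ kk] have "\<not> remX (X p) (\<pi> i' ! k') > 0"
          using k0 len[OF i'(1)] by simp
        then have "E (\<pi> i' ! k') \<le> p" unfolding E_def by (intro Least_le) simp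
        then have "E (\<pi> i' ! k') < e" using Eg H g_def by simp
        have "k' < m" using kk k0 by simp
        have "i' < n \<and> k' < m \<and> (\<forall>l<k'. a i' (\<pi> i' ! l) = X m i' (\<pi> i' ! l))
          \<and> X m i' (\<pi> i' ! k') < a i' (\<pi> i' ! k') \<and> E (\<pi> i' ! k') = E (\<pi> i' ! k')"
          using 2 i'(1) \<open>k' < m\<close> by simp
        then show ?thesis using less[OF \<open>E (\<pi> i' ! k') < e\<close>] by blast
      qed
    qed
  qed
qed

end

theorem theorem1:
  fixes n m :: nat and q r :: "nat \<Rightarrow> real" and \<pi> :: "nat \<Rightarrow> nat list"
    and a :: "nat \<Rightarrow> nat \<Rightarrow> real"
  assumes q_pos: "\<forall>j<m. q j > 0"
    and r_pos: "\<forall>i<n. r i > 0"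
    and balance: "(\<Sum>j<m. q j) = (\<Sum>i<n. r i)"
    and prefs: "\<forall>i<n. is_pref_list m (\<pi> i)"
    and alloc: "is_allocation n m q r a"
    and neq: "\<exists>i<n. \<exists>j<m. a i j \<noteq> SG n m q r \<pi> i j"
  shows "\<exists>i<n. lex_prefers m (\<pi> i) (SG n m q r \<pi> i) (a i)"
proof -
  from neq obtain i j where ij: "i < n" "j < m" "a i j \<noteq> SG n m q r \<pi> i j" by auto
  then have npos: "0 < n" by simp
  interpret S: SGL n m q r \<pi>
    by (rule SGL.intro) (rule q_pos, rule r_pos, rule prefs, rule npos)
  have SGX: "SG n m q r \<pi> = S.X m" unfolding SG_def S.X_def S.stp_def ..
  from S.pos_of[OF ij(1,2)] obtain k0 where k0: "k0 < m" "\<pi> i ! k0 = j" by auto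
  have "a i (\<pi> i ! k0) \<noteq> S.X m i (\<pi> i ! k0)" using ij(3) unfolding k0(2) SGX .
  from S.firstdiff[where a=a and F="S.X m", OF ij(1) k0(1) this]
  consider "lex_prefers m (\<pi> i) (S.X m i) (a i)"
    | k where "k \<le> k0" "\<forall>l<k. a i (\<pi> i ! l) = S.X m i (\<pi> i ! l)"
      "S.X m i (\<pi> i ! k) < a i (\<pi> i ! k)" by blast
  then show ?thesis
  proof cases
    case 1 then show ?thesis using ij(1) unfolding SGX by blast
  next
    case 2
    have km: "k < m" using 2(1) k0(1) by linarith
    have "i < n \<and> k < m \<and> (\<forall>l<k. a i (\<pi> i ! l) = S.X m i (\<pi> i ! l))
          \<and> S.X m i (\<pi> i ! k) < a i (\<pi> i ! k) \<and> S.E (\<pi> i ! k) = S.E (\<pi> i ! k)"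
      by (intro conjI ij(1) km 2(2) 2(3) refl)
    then have "\<exists>i'<n. lex_prefers m (\<pi> i') (S.X m i') (a i')"
      by (rule mp[OF spec[OF spec[OF S.descent[OF alloc, of "S.E (\<pi> i ! k)"], of i], of k]])
    then show ?thesis unfolding SGX .
  qed
qed

end
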